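(* Assume (H1)–(H4) and let $H$ be a defining function for $Y$. Let $u:X\to\mathbb{R}$ be an upper semicontinuous viscosity subsolution of $( * )$. Then $\partial u(X)\subset\bar Y$.
   Context: Standing hypotheses (H1)–(H4): (H1) $X,Y\subset\mathbb{R}^n$ are convex, bounded, open domains. (H2) $f\in L^1(X)$ is non-negative and lower semicontinuous. (H3) $g\in L^1(\mathbb{R}^n)$ is positive on $Y$, vanishes on $\mathbb{R}^n\setminus Y$, and is upper semicontinuous. (H4) $\int_X f\,dx=\int_Y g\,dy$. A defining function for $Y$ is a continuous $H:\mathbb{R}^n\to\mathbb{R}$ with $H<0$ on $Y$, $H=0$ on $\partial Y$, $H>0$ on $\mathbb{R}^n\setminus\bar Y$. $\lambda_1(A)$ is the smallest eigenvalue of a symmetric matrix $A$. Equation $( * )$: $\max\{-g(\nabla u)\det(D^2u)+f,-\lambda_1(D^2u),H(\nabla u)\}=0$ in $X$. With $F(x,p,A)=\max\{-g(p)\det A+f(x),-\lambda_1(A),H(p)\}$, an upper semicontinuous $u$ is a viscosity subsolution of $( * )$ if for every $\phi\in C^2$ and $x\in X$ at which $u-\phi$ has a local maximum, $F_*(x,\nabla\phi(x),D^2\phi(x))\le0$, $F_*$ the lower semicontinuous envelope of $F$. Such subsolutions are convex, so $\partial u(x)$ denotes the subdifferential of $u$ at $x$ and $\partial u(E)=\bigcup_{x\in E}\partial u(x)$. *)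

theory Defs
  imports "HOL-Analysis.Analysis"
begin

definition lsc_on :: "('a::metric_space) set \<Rightarrow> ('a \<Rightarrow> real) \<Rightarrow> bool" where
  "lsc_on S h \<longleftrightarrow> (\<forall>x\<in>S. \<forall>t. t < h x \<longrightarrow> (\<exists>e>0. \<forall>y\<in>S. dist y x < e \<longrightarrow> t < h y))"

definition usc_on :: "('a::metric_space) set \<Rightarrow> ('a \<Rightarrow> real) \<Rightarrow> bool" where
  "usc_on S h \<longleftrightarrow> (\<forall>x\<in>S. \<forall>t. h x < t \<longrightarrow> (\<exists>e>0. \<forall>y\<in>S. dist y x < e \<longrightarrow> h y < t))"

definition defining_function :: "(real^'n) set \<Rightarrow> (real^'n \<Rightarrow> real) \<Rightarrow> bool" where
  "defining_function Y H \<longleftrightarrow> continuous_on UNIV H \<and>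
     (\<forall>y\<in>Y. H y < 0) \<and> (\<forall>y\<in>frontier Y. H y = 0) \<and> (\<forall>y\<in>- closure Y. H y > 0)"

definition symmetric_mat :: "real^'n^'n \<Rightarrow> bool" where
  "symmetric_mat A \<longleftrightarrow> transpose A = A"

definition lambda1 :: "real^'n^'n \<Rightarrow> real" where
  "lambda1 A = Min {c. \<exists>v. v \<noteq> 0 \<and> A *v v = c *\<^sub>R v}"

definition opF :: "(real^'n \<Rightarrow> real) \<Rightarrow> (real^'n \<Rightarrow> real) \<Rightarrow> (real^'n \<Rightarrow> real)
     \<Rightarrow> real^'n \<Rightarrow> real^'n \<Rightarrow> real^'n^'n \<Rightarrow> real" where
  "opF f g H x p A = max (- g p * det A + f x) (max (- lambda1 A) (H p))"

text \<open>Lower semicontinuous envelope of F on X \<times> R^n \<times> Sym(n).\<close>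
definition opF_lower :: "(real^'n) set \<Rightarrow> (real^'n \<Rightarrow> real) \<Rightarrow> (real^'n \<Rightarrow> real) \<Rightarrow> (real^'n \<Rightarrow> real)
     \<Rightarrow> real^'n \<Rightarrow> real^'n \<Rightarrow> real^'n^'n \<Rightarrow> real" where
  "opF_lower X f g H x p A =
     (SUP r\<in>{r::real. r > 0}. Inf {opF f g H y q B | y q B.
        y \<in> X \<and> symmetric_mat B \<and> dist y x < r \<and> dist q p < r \<and> dist B A < r})"

definition C2_with :: "(real^'n \<Rightarrow> real) \<Rightarrow> (real^'n \<Rightarrow> real^'n) \<Rightarrow> (real^'n \<Rightarrow> real^'n^'n) \<Rightarrow> bool" where
  "C2_with phi Dphi D2phi \<longleftrightarrow>
     (\<forall>x. (phi has_derivative (\<lambda>h. Dphi x \<bullet> h)) (at x)) \<and>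
     (\<forall>x. (Dphi has_derivative (\<lambda>h. D2phi x *v h)) (at x)) \<and>
     continuous_on UNIV D2phi"

definition viscosity_subsolution :: "(real^'n) set \<Rightarrow> (real^'n \<Rightarrow> real) \<Rightarrow> (real^'n \<Rightarrow> real)
     \<Rightarrow> (real^'n \<Rightarrow> real) \<Rightarrow> (real^'n \<Rightarrow> real) \<Rightarrow> bool" where
  "viscosity_subsolution X f g H u \<longleftrightarrow> usc_on X u \<and>
     (\<forall>phi Dphi D2phi x. C2_with phi Dphi D2phi \<and> x \<in> X \<and>
        (\<exists>e>0. \<forall>y\<in>X. dist y x < e \<longrightarrow> u y - phi y \<le> u x - phi x)
        \<longrightarrow> opF_lower X f g H x (Dphi x) (D2phi x) \<le> 0)"

definition subdiff :: "(real^'n) set \<Rightarrow> (real^'n \<Rightarrow> real) \<Rightarrow> real^'n \<Rightarrow> (real^'n) set" where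
  "subdiff X u x = {p. \<forall>y\<in>X. u y \<ge> u x + p \<bullet> (y - x)}"

definition subdiff_set :: "(real^'n) set \<Rightarrow> (real^'n \<Rightarrow> real) \<Rightarrow> (real^'n) set \<Rightarrow> (real^'n) set" where
  "subdiff_set X u E = (\<Union>x\<in>E. subdiff X u x)"

end

theory Submission
  imports Defs
begin

lemma usc_max:
  fixes h :: "'a::metric_space \<Rightarrow> real"
  assumes "compact S" "S \<noteq> {}" "usc_on S h"
  shows "\<exists>x\<in>S. \<forall>y\<in>S. h y \<le> h x"
proof (rule ccontr)
  assume "\<not> ?thesis"
  then have nm: "\<forall>x\<in>S. \<exists>y\<in>S. h x < h y" by (auto simp: not_le)
  define Oc where "Oc y = \<Union>{ball z e | z e. z\<in>S \<and> e>0 \<and> (\<forall>v\<in>S. dist v z < e \<longrightarrow> h v < h y)}" for y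
  have op: "open (Oc y)" for y unfolding Oc_def by (rule open_Union) blast
  have cov: "S \<subseteq> (\<Union>y\<in>S. Oc y)"
  proof
    fix z assume z: "z \<in> S"
    then obtain y where y: "y \<in> S" "h z < h y" using nm by blast
    then obtain e where e: "e > 0" "\<forall>v\<in>S. dist v z < e \<longrightarrow> h v < h y"
      using assms(3) z unfolding usc_on_def by blast
    have "ball z e \<in> {ball z e | z e. z\<in>S \<and> e>0 \<and> (\<forall>v\<in>S. dist v z < e \<longrightarrow> h v < h y)}"
      using z e by blast
    then have "z \<in> Oc y" unfolding Oc_def using e(1) by (meson UnionI centre_in_ball)
    then show "z \<in> (\<Union>y\<in>S. Oc y)" using y by blast
  qed
  obtain F where F: "F \<subseteq> S" "finite F" "S \<subseteq> (\<Union>y\<in>F. Oc y)"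
    using compactE_image[OF assms(1) op cov] by blast
  have "F \<noteq> {}" using F assms(2) by auto
  then have "Max (h ` F) \<in> h ` F" using F(2) by (intro Max_in) auto
  then obtain ys where ys0: "ys \<in> F" "h ys = Max (h ` F)" by (metis imageE)
  have ys: "ys \<in> F" "\<forall>y\<in>F. h y \<le> h ys"
    using ys0 F(2) by auto
  then have "ys \<in> S" using F by auto
  then obtain y where "y \<in> F" "ys \<in> Oc y" using F by auto
  then obtain T where T: "T \<in> {ball z e | z e. z\<in>S \<and> e>0 \<and> (\<forall>v\<in>S. dist v z < e \<longrightarrow> h v < h y)}" "ys \<in> T"
    unfolding Oc_def by (meson UnionE)
  then obtain z e where "z\<in>S" "e>0" "\<forall>v\<in>S. dist v z < e \<longrightarrow> h v < h y" "ys \<in> ball z e"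
    by blast
  then have "h ys < h y" using \<open>ys \<in> S\<close> by (simp add: dist_commute)
  moreover have "h y \<le> h ys" using ys \<open>y \<in> F\<close> by blast
  ultimately show False by linarith
qed

lemma env:
  fixes H :: "real^'n \<Rightarrow> real"
  assumes HH: "defining_function Y H" and bY: "bounded Y" and x: "x \<in> X"
    and sA: "symmetric_mat A" and le: "opF_lower X f g H x P A \<le> 0"
  shows "H P \<le> 0"
proof -
  have cH: "continuous_on UNIV H" using HH unfolding defining_function_def by blast
  have "compact (closure Y)" using bY by (simp add: compact_closure)
  then have "compact (H ` closure Y)" by (meson cH compact_continuous_image continuous_on_subset top_greatest)
  then obtain Bd where Bd: "\<forall>z\<in>H ` closure Y. norm z \<le> Bd" using compact_imp_bounded bounded_iff by metis
  have lbH: "H q \<ge> - \<bar>Bd\<bar>" for q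
  proof (cases "q \<in> closure Y")
    case True then show ?thesis using Bd by force
  next
    case False then have "H q > 0" using HH unfolding defining_function_def by auto
    then show ?thesis by linarith
  qed
  define S where "S r = {opF f g H y q B |y q B.
        y \<in> X \<and> symmetric_mat B \<and> dist y x < r \<and> dist q P < r \<and> dist B A < r}" for r
  have opFge: "opF f g H y q B \<ge> H q" for y q B unfolding opF_def by simp
  have inS: "opF f g H x P A \<in> S r" if "r > 0" for r unfolding S_def using that x sA by force
  have bb: "bdd_below (S r)" for r
  proof (rule bdd_belowI)
    fix z assume "z \<in> S r"
    then obtain y q B where "z = opF f g H y q B" unfolding S_def by blast
    then show "- \<bar>Bd\<bar> \<le> z" using opFge[of q y B] lbH[of q] by linarith
  qed
  have ba: "bdd_above ((\<lambda>r. Inf (S r)) ` {r. r > 0})"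
    unfolding bdd_above_def using cInf_lower[OF inS bb] by auto
  have eq: "opF_lower X f g H x P A = (SUP r\<in>{r. r > 0}. Inf (S r))"
    unfolding opF_lower_def S_def by simp
  show ?thesis
  proof (rule field_le_epsilon)
    fix ep :: real assume ep: "ep > 0"
    obtain d where d: "d > 0" "\<forall>q. dist q P < d \<longrightarrow> dist (H q) (H P) < ep"
      using cH ep unfolding continuous_on_iff by blast
    have "H P - ep \<le> Inf (S d)"
    proof (rule cInf_greatest)
      show "S d \<noteq> {}" using inS d by blast
      fix z assume "z \<in> S d"
      then obtain y q B where "z = opF f g H y q B" "dist q P < d" unfolding S_def by blast
      moreover have "dist (H q) (H P) < ep" using d calculation by blast
      ultimately show "H P - ep \<le> z" using opFge[of q y B] by (auto simp: dist_real_def)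
    qed
    also have "\<dots> \<le> opF_lower X f g H x P A" unfolding eq
      by (rule cSup_upper) (use d ba in auto)
    finally show "H P \<le> 0 + ep" using le by simp
  qed
qed

lemma usc_sub:
  fixes u phi :: "'a::metric_space \<Rightarrow> real"
  assumes "usc_on X u" "S \<subseteq> X" "continuous_on S phi"
  shows "usc_on S (\<lambda>y. u y - phi y)"
  unfolding usc_on_def
proof (intro ballI allI impI)
  fix x t assume x: "x \<in> S" and lt: "u x - phi x < t"
  define eta where "eta = t - (u x - phi x)"
  have eta: "eta > 0" using lt eta_def by simp
  have xX: "x \<in> X" using x assms(2) by blast
  have "u x < u x + eta/2" using eta by simp
  then obtain e1 where e1: "e1 > 0" "\<forall>y\<in>X. dist y x < e1 \<longrightarrow> u y < u x + eta/2"
    using assms(1) xX unfolding usc_on_def by blast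
  obtain e2 where e2: "e2 > 0" "\<forall>y\<in>S. dist y x < e2 \<longrightarrow> dist (phi y) (phi x) < eta/2"
    using assms(3) x eta unfolding continuous_on_iff by (metis half_gt_zero)
  show "\<exists>e>0. \<forall>y\<in>S. dist y x < e \<longrightarrow> u y - phi y < t"
  proof (intro exI[of _ "min e1 e2"] conjI ballI impI)
    show "min e1 e2 > 0" using e1 e2 by simp
    fix y assume y: "y \<in> S" "dist y x < min e1 e2"
    then have "u y < u x + eta/2" using e1 assms(2) by auto
    moreover have "dist (phi y) (phi x) < eta/2" using e2 y by auto
    then have "phi x - phi y < eta/2" unfolding dist_real_def by linarith
    ultimately show "u y - phi y < t" using eta_def by linarith
  qed
qed

lemma C2_quad:
  fixes P e xz :: "real^'n" and cc gam CK K :: real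
  defines "phi \<equiv> \<lambda>y. cc + P \<bullet> (y - xz) + gam * (e \<bullet> (y - xz)) + CK * ((e \<bullet> (y - xz)) * (e \<bullet> (y - xz)))
                 + K * ((y - xz) \<bullet> (y - xz))"
    and "Dphi \<equiv> \<lambda>y. P + gam *\<^sub>R e + (2 * CK * (e \<bullet> (y - xz))) *\<^sub>R e + (2 * K) *\<^sub>R (y - xz)"
    and "A \<equiv> (\<chi> i j. 2 * CK * (e $ i * e $ j) + (if i = j then 2 * K else 0)) :: real^'n^'n"
  shows "C2_with phi Dphi (\<lambda>_. A)" "symmetric_mat A"
proof -
  have d1: "(phi has_derivative (\<lambda>h. Dphi x \<bullet> h)) (at x)" for x
  proof -
    have "(phi has_derivative (\<lambda>h. P \<bullet> h + gam * (e \<bullet> h) + CK * ((e \<bullet> h) * (e \<bullet> (x - xz)) + (e \<bullet> (x - xz)) * (e \<bullet> h))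
          + K * (h \<bullet> (x - xz) + (x - xz) \<bullet> h))) (at x)"
      unfolding phi_def by (auto intro!: derivative_eq_intros)
    moreover have "(\<lambda>h. P \<bullet> h + gam * (e \<bullet> h) + CK * ((e \<bullet> h) * (e \<bullet> (x - xz)) + (e \<bullet> (x - xz)) * (e \<bullet> h))
          + K * (h \<bullet> (x - xz) + (x - xz) \<bullet> h)) = (\<lambda>h. Dphi x \<bullet> h)"
      unfolding Dphi_def by (auto simp: inner_add_left inner_commute algebra_simps)
    ultimately show ?thesis by simp
  qed
  have Av: "A *v h = (2 * CK * (e \<bullet> h)) *\<^sub>R e + (2 * K) *\<^sub>R h" for h
  proof -
    have "(A *v h) $ i = ((2 * CK * (e \<bullet> h)) *\<^sub>R e + (2 * K) *\<^sub>R h) $ i" for i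
    proof -
      have dl: "(\<Sum>j\<in>UNIV. (if i = j then 2 * K * h $ j else 0)) = 2 * K * h $ i"
        by (simp add: sum.delta sum.delta')
      have "(A *v h) $ i = (\<Sum>j\<in>UNIV. (2 * CK * (e $ i * e $ j) + (if i = j then 2 * K else 0)) * h $ j)"
        unfolding A_def by (simp add: matrix_vector_mult_def)
      also have "\<dots> = (\<Sum>j\<in>UNIV. 2 * CK * e $ i * (e $ j * h $ j)) + (\<Sum>j\<in>UNIV. (if i = j then 2 * K * h $ j else 0))"
        by (simp only: distrib_right sum.distrib mult.assoc if_distrib[of "\<lambda>z. z * h $ _"] mult_zero_left)
      also have "\<dots> = 2 * CK * e $ i * (e \<bullet> h) + 2 * K * h $ i"
        by (simp add: inner_vec_def sum_distrib_left dl)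
      finally show ?thesis by simp
    qed
    then show ?thesis by (simp add: vec_eq_iff)
  qed
  have d2: "(Dphi has_derivative (\<lambda>h. A *v h)) (at x)" for x
  proof -
    have "(Dphi has_derivative (\<lambda>h. (2 * CK * (e \<bullet> h)) *\<^sub>R e + (2 * K) *\<^sub>R h)) (at x)"
      unfolding Dphi_def by (auto intro!: derivative_eq_intros)
    then show ?thesis by (simp add: Av)
  qed
  show "C2_with phi Dphi (\<lambda>_. A)" unfolding C2_with_def using d1 d2 by auto
  show "symmetric_mat A" unfolding symmetric_mat_def A_def
    by (simp add: vec_eq_iff transpose_def mult.commute)
qed


theorem mainTheorem3:
  fixes X Y :: "(real^'n) set" and f g H u :: "real^'n \<Rightarrow> real"
  assumes H1: "convex X" "bounded X" "open X" "convex Y" "bounded Y" "open Y"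
    and H2: "f absolutely_integrable_on X" "\<forall>x\<in>X. f x \<ge> 0" "lsc_on X f"
    and H3: "g absolutely_integrable_on UNIV" "\<forall>y\<in>Y. g y > 0" "\<forall>y. y \<notin> Y \<longrightarrow> g y = 0"
            "usc_on UNIV g"
    and H4: "integral X f = integral Y g"
    and HH: "defining_function Y H"
    and sub: "viscosity_subsolution X f g H u"
  shows "subdiff_set X u X \<subseteq> closure Y"
proof
  fix P assume "P \<in> subdiff_set X u X"
  then obtain x0 where x0: "x0 \<in> X" and sg: "\<forall>y\<in>X. u y \<ge> u x0 + P \<bullet> (y - x0)"
    unfolding subdiff_set_def subdiff_def by blast
  have uusc: "usc_on X u" using sub unfolding viscosity_subsolution_def by blast
  show "P \<in> closure Y"
  proof (rule ccontr)
    assume notin: "P \<notin> closure Y"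
    obtain a b where ab: "a \<bullet> P < b" "\<forall>x\<in>closure Y. b < a \<bullet> x"
      using separating_hyperplane_closed_point[OF convex_closure[OF H1(4)] closed_closure notin] by blast
    obtain r where r: "r > 0" "cball x0 r \<subseteq> X" using H1(3) x0 open_contains_cball by blast
    have "usc_on (cball x0 r) (\<lambda>y. u y - (\<lambda>_. 0) y)"
      by (rule usc_sub[OF uusc r(2)]) simp
    then have "usc_on (cball x0 r) u" by simp
    then obtain xm where xm: "xm \<in> cball x0 r" "\<forall>y\<in>cball x0 r. u y \<le> u xm"
      using usc_max[of "cball x0 r" u] r(1) by force
    define w where "w y = u y - u x0 - P \<bullet> (y - x0)" for y
    define M where "M = u xm - u x0 + norm P * r"
    have wM: "w y \<le> M" if "y \<in> cball x0 r" for y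
    proof -
      have "- (P \<bullet> (y - x0)) \<le> norm P * norm (y - x0)"
        using Cauchy_Schwarz_ineq2[of P "y - x0"] by linarith
      also have "\<dots> \<le> norm P * r" using that by (simp add: dist_norm norm_minus_commute mult_left_mono)
      finally have "- (P \<bullet> (y - x0)) \<le> norm P * r" .
      moreover have "u y \<le> u xm" using xm(2) that by blast
      ultimately show ?thesis unfolding w_def M_def by linarith
    qed
    have w0: "w y \<ge> 0" if "y \<in> X" for y using sg that unfolding w_def by auto
    have M0: "M \<ge> 0" using wM[of x0] w0[OF x0] r(1) by simp
    obtain e :: "real^'n" where e: "norm e = 1" "a = norm a *\<^sub>R e"
    proof (cases "a = 0")
      case True
      obtain e :: "real^'n" where "norm e = 1" using vector_choose_size[of 1] by auto
      then show ?thesis using that True by simp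
    next
      case False
      then show ?thesis using that[of "a /\<^sub>R norm a"] by simp
    qed
    have ee: "e \<bullet> e = 1" using e(1) by (simp add: norm_eq_1)
    define gam where "gam = (b - a \<bullet> P) / (norm a + 1)"
    have gam: "gam > 0" "norm a * gam \<le> b - a \<bullet> P"
    proof -
      have na: "norm a + 1 > 0" by (simp add: add_nonneg_pos)
      show "gam > 0" unfolding gam_def using ab(1) na by (intro divide_pos_pos) auto
      have "norm a * gam \<le> (norm a + 1) * gam" using \<open>gam > 0\<close> by simp
      also have "\<dots> = b - a \<bullet> P" unfolding gam_def using na by simp
      finally show "norm a * gam \<le> b - a \<bullet> P" .
    qed
    define C where "C = (M + gam * r + 1) / r^2"
    have C: "C > 0" "C * r^2 = M + gam * r + 1"
    proof -
      have "gam * r > 0" using gam r by simp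
      then have p: "M + gam * r + 1 > 0" using M0 by linarith
      show "C > 0" unfolding C_def using p r by (intro divide_pos_pos) auto
      show "C * r^2 = M + gam * r + 1" unfolding C_def using r by simp
    qed
    define t where "t = min (r/2) (gam / (2 * C))"
    have t: "t > 0" "t \<le> r/2" "C * t \<le> gam / 2"
    proof -
      have "gam / (2 * C) > 0" using gam C by simp
      then show "t > 0" "t \<le> r/2" unfolding t_def using r(1) by auto
      have "C * t \<le> C * (gam / (2 * C))" unfolding t_def using C by (intro mult_left_mono) auto
      then show "C * t \<le> gam / 2" using C by simp
    qed
    define V where "V = gam * t / 2"
    have V: "V > 0" unfolding V_def using gam t by simp
    have "u x0 < u x0 + V/2" using V by simp
    then obtain rho0 where rho0: "rho0 > 0" "\<forall>y\<in>X. dist y x0 < rho0 \<longrightarrow> u y < u x0 + V/2"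
      using uusc x0 unfolding usc_on_def by blast
    have np: "norm P + 1 > 0" by (simp add: add_nonneg_pos)
    define rho where "rho = min rho0 (min r (V / (2 * (norm P + 1))))"
    have rho: "rho > 0" "rho \<le> r" "rho \<le> rho0" "rho * (norm P + 1) \<le> V/2"
    proof -
      have "V / (2 * (norm P + 1)) > 0" using V np by simp
      then show "rho > 0" "rho \<le> r" "rho \<le> rho0" unfolding rho_def using rho0 r by auto
      have "rho \<le> V / (2 * (norm P + 1))" unfolding rho_def by simp
      then have "rho * (norm P + 1) \<le> V / (2 * (norm P + 1)) * (norm P + 1)"
        using np by (intro mult_right_mono) auto
      also have "\<dots> = V / 2" using np by (simp add: field_simps)
      finally show "rho * (norm P + 1) \<le> V/2" .
    qed
    have wsmall: "w y < V" if "y \<in> X" "dist y x0 < rho" for y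
    proof -
      have "u y < u x0 + V/2" using rho0 that rho by auto
      moreover have "- (P \<bullet> (y - x0)) \<le> norm P * norm (y - x0)"
        using Cauchy_Schwarz_ineq2[of P "y - x0"] by linarith
      moreover have "norm (y - x0) \<le> rho" using that by (simp add: dist_norm)
      then have "norm P * norm (y - x0) \<le> norm P * rho"
        by (intro mult_left_mono) auto
      moreover have "norm P * rho \<le> rho * (norm P + 1)" using rho by (simp add: algebra_simps)
      ultimately show ?thesis unfolding w_def using rho(4) by linarith
    qed
    define K where "K = max C ((M + 1) / rho^2)"
    have K: "K \<ge> C" "K * rho^2 \<ge> M + 1"
    proof -
      show "K \<ge> C" unfolding K_def by simp
      have "K * rho^2 \<ge> (M + 1) / rho^2 * rho^2" unfolding K_def using rho by (intro mult_right_mono) auto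
      moreover have "(M + 1) / rho^2 * rho^2 = M + 1" using rho by simp
      ultimately show "K * rho^2 \<ge> M + 1" by simp
    qed
    define phi where "phi \<equiv> \<lambda>y. u x0 + P \<bullet> (y - x0) + gam * (e \<bullet> (y - x0)) + (C - K) * ((e \<bullet> (y - x0)) * (e \<bullet> (y - x0)))
                 + K * ((y - x0) \<bullet> (y - x0))"
    define Dphi where "Dphi \<equiv> \<lambda>y. P + gam *\<^sub>R e + (2 * (C - K) * (e \<bullet> (y - x0))) *\<^sub>R e + (2 * K) *\<^sub>R (y - x0)"
    define A where "A \<equiv> (\<chi> i j. 2 * (C - K) * (e $ i * e $ j) + (if i = j then 2 * K else 0)) :: real^'n^'n"
    have C2: "C2_with phi Dphi (\<lambda>_. A)"
      unfolding phi_def Dphi_def A_def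
      by (rule C2_quad(1)[where cc="u x0" and P=P and xz=x0 and gam=gam and e=e and CK="C - K" and K=K])
    have symA: "symmetric_mat A"
      unfolding A_def
      by (rule C2_quad(2)[where e=e and CK="C - K" and K=K])
    define R where "R = cball x0 r \<inter> {y. e \<bullet> y \<le> e \<bullet> x0}"
    have Rs: "e \<bullet> (y - x0) \<le> 0" "norm (y - x0) \<le> r" "y \<in> X" if "y \<in> R" for y
      using that r(2) unfolding R_def by (auto simp: inner_diff_right dist_norm norm_minus_commute)
    have cR: "compact R" unfolding R_def
      by (intro compact_Int_closed compact_cball closed_halfspace_le)
    have x0R: "x0 \<in> R" unfolding R_def using r by auto
    define h where "h = (\<lambda>y. u y - phi y)"
    have hdef: "h y = u y - phi y" for y by (simp add: h_def)
    have hw: "h y = w y - gam * (e \<bullet> (y - x0)) - C * (e \<bullet> (y - x0))^2 - K * ((y - x0) \<bullet> (y - x0) - (e \<bullet> (y - x0))^2)" for y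
      unfolding hdef w_def phi_def by (simp add: power2_eq_square algebra_simps)
    have cphi: "continuous_on R phi" unfolding phi_def by (intro continuous_intros)
    have uR: "usc_on R h" unfolding h_def
      by (rule usc_sub[OF uusc _ cphi]) (use Rs in auto)
    have "\<exists>x\<in>R. \<forall>y\<in>R. h y \<le> h x" using usc_max[OF cR _ uR] x0R by blast
    then obtain y1 where y1: "y1 \<in> R" "\<forall>y\<in>R. h y \<le> h y1" by blast
    define ys where "ys = x0 - t *\<^sub>R e"
    have ysR: "ys \<in> R" unfolding R_def ys_def using t e(1) ee r
      by (auto simp: dist_norm inner_diff_right)
    have "h ys \<ge> V"
    proof -
      have s: "e \<bullet> (ys - x0) = - t" "(ys - x0) \<bullet> (ys - x0) = t^2" unfolding ys_def using ee
        by (auto simp: power2_eq_square)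
      have "w ys \<ge> 0" using w0 Rs(3)[OF ysR] by blast
      moreover have "C * t * t \<le> gam / 2 * t" using t by (intro mult_right_mono) auto
      then have "C * t^2 \<le> gam * t / 2" by (simp add: power2_eq_square)
      moreover have "h ys = w ys + gam * t - C * t^2" unfolding hw s by simp
      ultimately show ?thesis unfolding V_def by linarith
    qed
    then have hy1: "h y1 \<ge> V" using y1 ysR by force
    have sq: "(e \<bullet> (y - x0))^2 \<le> (y - x0) \<bullet> (y - x0)" for y
    proof -
      have "\<bar>e \<bullet> (y - x0)\<bar> \<le> norm (y - x0)" using Cauchy_Schwarz_ineq2[of e "y - x0"] e(1) by simp
      then have "\<bar>e \<bullet> (y - x0)\<bar>^2 \<le> (norm (y - x0))^2" by (intro power_mono) auto
      then show ?thesis by (simp add: power2_norm_eq_inner)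
    qed
    have bd1: "h y < V" if "y \<in> R" "norm (y - x0) = r" for y
    proof -
      define s where "s = e \<bullet> (y - x0)"
      have q: "(y - x0) \<bullet> (y - x0) = r^2" using that by (metis power2_norm_eq_inner)
      have "\<bar>s\<bar> \<le> r" unfolding s_def using Cauchy_Schwarz_ineq2[of e "y - x0"] e(1) that by simp
      then have "- s \<le> r" by linarith
      then have f1: "gam * (- s) \<le> gam * r" using gam by (intro mult_left_mono) auto
      have "s^2 \<le> r^2" using sq[of y] q unfolding s_def by simp
      then have f2: "C * (r^2 - s^2) \<le> K * (r^2 - s^2)" using K by (intro mult_right_mono) auto
      have "y \<in> cball x0 r" using Rs(2)[OF that(1)] by (simp add: dist_norm norm_minus_commute)
      then have f3: "w y \<le> M" using wM by blast
      have "h y = w y - gam * s - C * s^2 - K * (r^2 - s^2)" using hw[of y] q unfolding s_def by simp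
      then have "h y = w y + gam * (- s) - C * r^2 - (K * (r^2 - s^2) - C * (r^2 - s^2))"
        by (simp add: algebra_simps)
      then show ?thesis using f1 f2 f3 C V by linarith
    qed
    have bd2: "h y < V" if "y \<in> R" "e \<bullet> (y - x0) = 0" for y
    proof -
      have hq: "h y = w y - K * ((y - x0) \<bullet> (y - x0))" unfolding hw that(2) by simp
      show ?thesis
      proof (cases "dist y x0 < rho")
        case True
        have "K * ((y - x0) \<bullet> (y - x0)) \<ge> 0" using K C by (intro mult_nonneg_nonneg) auto
        then show ?thesis using wsmall[OF Rs(3)[OF that(1)] True] hq by linarith
      next
        case False
        then have "rho \<le> norm (y - x0)" by (simp add: dist_norm)
        then have "rho^2 \<le> (norm (y - x0))^2" using rho by (intro power_mono) auto
        then have "rho^2 \<le> (y - x0) \<bullet> (y - x0)" by (simp add: power2_norm_eq_inner)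
        then have "K * rho^2 \<le> K * ((y - x0) \<bullet> (y - x0))" using K C by (intro mult_left_mono) auto
        moreover have "y \<in> cball x0 r" using Rs(2)[OF that(1)] by (simp add: dist_norm norm_minus_commute)
        then have "w y \<le> M" using wM by blast
        ultimately show ?thesis using K V hq by linarith
      qed
    qed
    have "e \<bullet> (y1 - x0) \<noteq> 0" using bd2[OF y1(1)] hy1 by force
    then have s1: "e \<bullet> (y1 - x0) < 0" using Rs(1)[OF y1(1)] by linarith
    have "norm (y1 - x0) \<noteq> r" using bd1[OF y1(1)] hy1 by force
    then have n1: "norm (y1 - x0) < r" using Rs(2)[OF y1(1)] by linarith
    have y1X: "y1 \<in> X" using Rs(3)[OF y1(1)] .
    have locmax: "\<exists>ep>0. \<forall>y\<in>X. dist y y1 < ep \<longrightarrow> u y - phi y \<le> u y1 - phi y1"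
    proof (intro exI[of _ "min (r - norm (y1 - x0)) (- (e \<bullet> (y1 - x0)))"] conjI ballI impI)
      show "min (r - norm (y1 - x0)) (- (e \<bullet> (y1 - x0))) > 0" using s1 n1 by simp
      fix y assume y: "y \<in> X" "dist y y1 < min (r - norm (y1 - x0)) (- (e \<bullet> (y1 - x0)))"
      have d: "norm (y - y1) < r - norm (y1 - x0)" "norm (y - y1) < - (e \<bullet> (y1 - x0))"
        using y by (auto simp: dist_norm)
      have "norm (y - x0) \<le> norm (y - y1) + norm (y1 - x0)"
        using norm_triangle_ineq[of "y - y1" "y1 - x0"] by simp
      then have "norm (y - x0) \<le> r" using d by linarith
      then have c1: "y \<in> cball x0 r" by (simp add: dist_norm norm_minus_commute)
      have "e \<bullet> (y - y1) \<le> norm e * norm (y - y1)" by (rule norm_cauchy_schwarz)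
      then have "e \<bullet> y - e \<bullet> y1 \<le> norm (y - y1)" using e(1) by (simp add: inner_diff_right)
      then have "e \<bullet> y \<le> e \<bullet> x0" using d(2) by (simp add: inner_diff_right)
      then have "y \<in> R" unfolding R_def using c1 by simp
      then show "u y - phi y \<le> u y1 - phi y1" using y1 unfolding hdef by blast
    qed
    have VS: "\<And>phi Dphi D2phi x. C2_with phi Dphi D2phi \<Longrightarrow> x \<in> X \<Longrightarrow>
        (\<exists>e>0. \<forall>y\<in>X. dist y x < e \<longrightarrow> u y - phi y \<le> u x - phi x) \<Longrightarrow>
        opF_lower X f g H x (Dphi x) (D2phi x) \<le> 0"
      using sub unfolding viscosity_subsolution_def by blast
    have "opF_lower X f g H y1 (Dphi y1) A \<le> 0"
      using VS[OF C2 y1X locmax] by simp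
    then have "H (Dphi y1) \<le> 0" by (rule env[OF HH H1(5) y1X symA])
    then have "Dphi y1 \<in> closure Y" using HH unfolding defining_function_def by force
    then have "b < a \<bullet> Dphi y1" using ab by blast
    moreover
    have av: "a \<bullet> v = norm a * (e \<bullet> v)" for v
    proof -
      have "a \<bullet> v = (norm a *\<^sub>R e) \<bullet> v" by (rule arg_cong[where f="\<lambda>z. z \<bullet> v", OF e(2)])
      then show ?thesis by simp
    qed
    define s where "s = e \<bullet> (y1 - x0)"
    have "a \<bullet> Dphi y1 = a \<bullet> P + gam * (a \<bullet> e) + (2 * (C - K) * s) * (a \<bullet> e) + 2 * K * (a \<bullet> (y1 - x0))"
      unfolding Dphi_def s_def by (simp add: inner_add_right)
    then have "a \<bullet> Dphi y1 = a \<bullet> P + norm a * gam + 2 * C * (norm a * s)"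
      unfolding av[of e] av[of "y1 - x0"] ee s_def[symmetric] by (simp add: algebra_simps)
    moreover have "norm a * s \<le> 0" using s1 unfolding s_def by (simp add: mult_nonneg_nonpos)
    then have "2 * C * (norm a * s) \<le> 0" using C by (simp add: mult_nonneg_nonpos)
    ultimately show False using gam by linarith
  qed
qed

end
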